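(* Let $A=(a_1,\dots,a_n,a_\bot)$ with $1\le n\le m$ and $a_1,\dots,a_n$ distinct regular items, let $w:A^{\mathrm{ground}}\to\mathbb{R}$ satisfy $w(a_1)\ge\dots\ge w(a_n)\ge w(a_\bot)$, and let $\bar u,u:A^{\mathrm{ground}}\to[0,1]$ with $\bar u(a_\bot)=u(a_\bot)=1$ satisfy $\bar u(a)\ge u(a)$ for all $a$ in $A$. Then $f(A,\bar u,w)\ge f(A,u,w)$.
   Context: $A^{\mathrm{ground}}=\{a_1,\dots,a_N,a_\bot\}$ with regular items and a virtual item $a_\bot$; $1\le m\le N$. For a sequence $A$ of distinct elements of $A^{\mathrm{ground}}$ and functions $u,w$, $f(A,u,w)=\sum_{i=1}^{|A|}\prod_{j=1}^{i-1}(1-u(A(j)))\,u(A(i))\,w(A(i))$. *)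

theory Defs
  imports "HOL-Analysis.Analysis"
begin

definition f_val :: "'a list \<Rightarrow> ('a \<Rightarrow> real) \<Rightarrow> ('a \<Rightarrow> real) \<Rightarrow> real" where
  "f_val A u w = (\<Sum>i<length A. (\<Prod>j<i. (1 - u (A ! j))) * u (A ! i) * w (A ! i))"

end

theory Submission
  imports Defs
begin

lemma f_cons: "f_val (x # L) u w = u x * w x + (1 - u x) * f_val L u w"
proof -
  have "f_val (x # L) u w = (\<Sum>i<Suc (length L). (\<Prod>j<i. (1 - u ((x#L) ! j))) * u ((x#L) ! i) * w ((x#L) ! i))"
    by (simp add: f_val_def)
  also have "\<dots> = u x * w x + (\<Sum>i<length L. (\<Prod>j<Suc i. (1 - u ((x#L) ! j))) * u (L ! i) * w (L ! i))"
    by (subst sum.lessThan_Suc_shift) simp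
  also have "\<dots> = u x * w x + (\<Sum>i<length L. (1 - u x) * ((\<Prod>j<i. (1 - u (L ! j))) * u (L ! i) * w (L ! i)))"
    by (subst prod.lessThan_Suc_shift) (simp add: mult.assoc)
  also have "\<dots> = u x * w x + (1 - u x) * f_val L u w"
    by (simp add: f_val_def sum_distrib_left)
  finally show ?thesis .
qed

lemma f_single: "f_val [x] u w = u x * w x"
  by (simp add: f_val_def)

lemma f_upper:
  assumes "L \<noteq> []" "sorted_wrt (\<lambda>a b. w a \<ge> w b) L"
    "\<forall>a\<in>set L. 0 \<le> u a \<and> u a \<le> 1" "u (last L) = 1"
  shows "f_val L u w \<le> w (hd L)"
  using assms
proof (induction L)
  case Nil then show ?case by simp
next
  case (Cons x L)
  show ?case
  proof (cases "L = []")
    case True then show ?thesis using Cons.prems by (simp add: f_single)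
  next
    case False
    have ih: "f_val L u w \<le> w (hd L)" using Cons False by simp
    have "w (hd L) \<le> w x" using Cons.prems(2) False by (cases L) auto
    hence "f_val L u w \<le> w x" using ih by linarith
    moreover have "0 \<le> u x" "u x \<le> 1" using Cons.prems(3) by auto
    ultimately have "(1 - u x) * f_val L u w \<le> (1 - u x) * w x"
      by (intro mult_left_mono) auto
    then show ?thesis by (simp add: f_cons algebra_simps)
  qed
qed

lemma f_mono:
  assumes "L \<noteq> []" "sorted_wrt (\<lambda>a b. w a \<ge> w b) L"
    "\<forall>a\<in>set L. 0 \<le> u a \<and> u a \<le> 1" "\<forall>a\<in>set L. 0 \<le> ub a \<and> ub a \<le> 1"
    "u (last L) = 1" "ub (last L) = 1" "\<forall>a\<in>set L. u a \<le> ub a"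
  shows "f_val L u w \<le> f_val L ub w"
  using assms
proof (induction L)
  case Nil then show ?case by simp
next
  case (Cons x L)
  show ?case
  proof (cases "L = []")
    case True then show ?thesis using Cons.prems by (simp add: f_single)
  next
    case False
    have ih: "f_val L u w \<le> f_val L ub w" using Cons False by simp
    have up: "f_val L ub w \<le> w (hd L)" using Cons.prems False by (intro f_upper) auto
    have "w (hd L) \<le> w x" using Cons.prems(2) False by (cases L) auto
    hence a: "f_val L ub w \<le> w x" using up by linarith
    have b: "0 \<le> u x" "u x \<le> 1" "u x \<le> ub x" using Cons.prems by auto
    have "0 \<le> (ub x - u x) * (w x - f_val L ub w)" using a b by simp
    moreover have "0 \<le> (1 - u x) * (f_val L ub w - f_val L u w)" using ih b by simp
    ultimately show ?thesis by (simp add: f_cons algebra_simps)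
  qed
qed

theorem lemma14:
  fixes R :: "'a set" and abot :: 'a and N m n :: nat
    and xs :: "'a list" and w u ubar :: "'a \<Rightarrow> real"
  assumes "finite R" and "card R = N" and "abot \<notin> R"
    and "1 \<le> m" and "m \<le> N"
    and "length xs = n" and "1 \<le> n" and "n \<le> m"
    and "distinct xs" and "set xs \<subseteq> R"
    and "\<And>i j. i \<le> j \<Longrightarrow> j < n \<Longrightarrow> w (xs ! i) \<ge> w (xs ! j)"
    and "w (xs ! (n - 1)) \<ge> w abot"
    and "\<And>a. a \<in> insert abot R \<Longrightarrow> 0 \<le> u a \<and> u a \<le> 1"
    and "\<And>a. a \<in> insert abot R \<Longrightarrow> 0 \<le> ubar a \<and> ubar a \<le> 1"
    and "u abot = 1" and "ubar abot = 1"
    and "\<And>a. a \<in> set (xs @ [abot]) \<Longrightarrow> ubar a \<ge> u a"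
  shows "f_val (xs @ [abot]) ubar w \<ge> f_val (xs @ [abot]) u w"
proof (rule f_mono)
  show "sorted_wrt (\<lambda>a b. w b \<le> w a) (xs @ [abot])"
    unfolding sorted_wrt_iff_nth_less
  proof (intro allI impI)
    fix i j assume ij: "i < j" "j < length (xs @ [abot])"
    show "w ((xs @ [abot]) ! j) \<le> w ((xs @ [abot]) ! i)"
    proof (cases "j < n")
      case True then show ?thesis using ij assms(6,11) by (simp add: nth_append)
    next
      case False
      hence j: "j = n" using ij assms(6) by simp
      have "w (xs ! (n-1)) \<le> w (xs ! i)" using ij j assms(11) by simp
      then show ?thesis using j ij assms(6,12) by (simp add: nth_append)
    qed
  qed
qed (use assms in auto)

end
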